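(* In the consistent-read iteration defined in the context with step size $\beta=1$, any deterministic $x_0$, any integer $\tau\ge0$ and any deterministic $k(j)$ with $j-\tau\le k(j)\le j$, let $\rho=\max_l\frac1n\sum_{r=1}^n|A_{lr}|$. Then for every $j\ge0$ \[E_{j+1}\le E_j-(1-\rho\tau)\,\mathbb{E}\big[(x_{k(j)}-x^\star,d_j)_A^2\big]+\rho\sum_{t=k(j)}^{j-1}\mathbb{E}\big[(x_{k(t)}-x^\star,d_t)_A^2\big],\] and consequently for every $m\ge1$ \[E_m\le E_0-(1-2\rho\tau)\sum_{i=0}^{m-1}\mathbb{E}\big[(x_{k(i)}-x^\star,d_i)_A^2\big].\]
   Context: Let $n\ge2$ and let $A\in\mathbb{R}^{n\times n}$ be symmetric positive definite with all diagonal entries equal to $1$; let $b\in\mathbb{R}^n$ and $x^\star=A^{-1}b$. Write $(x,y)_A=y^TAx$ and $\|x\|_A=\sqrt{(x,x)_A}$; $e^{(1)},\dots,e^{(n)}$ are the standard basis vectors. Consistent-read iteration: let $d_0,d_1,\dots$ be i.i.d. random vectors, each uniformly distributed on $\{e^{(1)},\dots,e^{(n)}\}$; let $\tau\ge0$ be an integer and $k(0),k(1),\dots$ deterministic integers with $j-\tau\le k(j)\le j$; given $x_0\in\mathbb{R}^n$ and a step size $\beta$, define for $j\ge0$ \[\gamma_j=(x^\star-x_{k(j)},d_j)_A,\qquad x_{j+1}=x_j+\beta\gamma_jd_j.\] Define $E_m=\mathbb{E}[\|x_m-x^\star\|_A^2]$. An empty sum is zero. *)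

theory Defs
  imports "HOL-Analysis.Analysis" "HOL-Probability.Probability"
begin

definition A_inner :: "real^'n^'n \<Rightarrow> real^'n \<Rightarrow> real^'n \<Rightarrow> real" where
  "A_inner A x y = y \<bullet> (A *v x)"

text \<open>Consistent-read iteration for a fixed realization d of the directions.
  The guard on k j is vacuous under the standing hypothesis k j \<le> j.\<close>
fun cr_iter :: "real^'n^'n \<Rightarrow> real^'n \<Rightarrow> real^'n \<Rightarrow> real \<Rightarrow> (nat \<Rightarrow> nat)
    \<Rightarrow> (nat \<Rightarrow> real^'n) \<Rightarrow> nat \<Rightarrow> real^'n" where
  "cr_iter A xs x0 \<beta> k d 0 = x0"
| "cr_iter A xs x0 \<beta> k d (Suc j) =
     cr_iter A xs x0 \<beta> k d j
     + (\<beta> * A_inner A (xs - (if k j \<le> j then cr_iter A xs x0 \<beta> k d (k j) else x0)) (d j)) *\<^sub>R d j"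

definition cr_X :: "real^'n^'n \<Rightarrow> real^'n \<Rightarrow> real^'n \<Rightarrow> real \<Rightarrow> (nat \<Rightarrow> nat)
    \<Rightarrow> (nat \<Rightarrow> 'w \<Rightarrow> 'n) \<Rightarrow> nat \<Rightarrow> 'w \<Rightarrow> real^'n" where
  "cr_X A xs x0 \<beta> k dd j w = cr_iter A xs x0 \<beta> k (\<lambda>t. axis (dd t w) 1) j"

end

theory Submission
  imports Defs
begin


definition dep :: "nat set \<Rightarrow> ((nat \<Rightarrow> 'a) \<Rightarrow> 'b) \<Rightarrow> bool" where
  "dep S F \<longleftrightarrow> (\<forall>s s'. (\<forall>i\<in>S. s i = s' i) \<longrightarrow> F s = F s')"

lemma dep_restrict: "dep S F \<Longrightarrow> F s = F (restrict s S)"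
  unfolding dep_def by auto

lemma dep_mono: "dep S F \<Longrightarrow> S \<subseteq> T \<Longrightarrow> dep T F"
  unfolding dep_def by blast

context prob_space begin

lemma meas_dep:
  fixes dd :: "nat \<Rightarrow> 'a \<Rightarrow> 'n::finite" and F :: "(nat \<Rightarrow> 'n) \<Rightarrow> real"
  assumes ind: "indep_vars (\<lambda>_. count_space UNIV) dd UNIV" and S: "finite S" and F: "dep S F"
  shows "(\<lambda>w. F (\<lambda>i. dd i w)) \<in> borel_measurable M"
proof -
  have r: "(\<lambda>w. restrict (\<lambda>i. dd i w) S) \<in> measurable M (PiM S (\<lambda>_. count_space (UNIV::'n set)))"
    using ind by (intro measurable_restrict) (auto simp: indep_vars_def)
  have e: "PiM S (\<lambda>_. count_space (UNIV::'n set)) = count_space (PiE S (\<lambda>_. UNIV))"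
    using S by (intro count_space_PiM_finite) auto
  have "(\<lambda>w. F (restrict (\<lambda>i. dd i w) S)) \<in> borel_measurable M"
    using r unfolding e by (intro measurable_compose[OF r[unfolded e]]) auto
  moreover have "(\<lambda>w. F (\<lambda>i. dd i w)) = (\<lambda>w. F (restrict (\<lambda>i. dd i w) S))"
    using dep_restrict[OF F] by (simp add: fun_eq_iff)
  ultimately show ?thesis by simp
qed

lemma int_dep:
  fixes dd :: "nat \<Rightarrow> 'a \<Rightarrow> 'n::finite" and F :: "(nat \<Rightarrow> 'n) \<Rightarrow> real"
  assumes ind: "indep_vars (\<lambda>_. count_space UNIV) dd UNIV" and S: "finite S" and F: "dep S F"
  shows "integrable M (\<lambda>w. F (\<lambda>i. dd i w))"
proof (rule integrable_const_bound)
  let ?B = "Max ((\<lambda>s. \<bar>F s\<bar>) ` PiE S (\<lambda>_. UNIV))"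
  show "AE x in M. norm (F (\<lambda>i. dd i x)) \<le> ?B"
  proof (rule AE_I2)
    fix x
    have "norm (F (\<lambda>i. dd i x)) = \<bar>F (restrict (\<lambda>i. dd i x) S)\<bar>"
      using dep_restrict[OF F] by simp
    also have "\<dots> \<le> ?B" using S by (intro Max_ge finite_imageI finite_PiE) auto
    finally show "norm (F (\<lambda>i. dd i x)) \<le> ?B" .
  qed
qed (rule meas_dep[OF assms])

lemma indep_mult_dep:
  fixes dd :: "nat \<Rightarrow> 'a \<Rightarrow> 'n::finite" and F G :: "(nat \<Rightarrow> 'n) \<Rightarrow> real"
  assumes ind: "indep_vars (\<lambda>_. count_space UNIV) dd UNIV" and S: "finite S" and F: "dep S F"
    and T: "finite T" and G: "dep T G" and ST: "S \<inter> T = {}"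
  shows "(\<integral>w. F (\<lambda>i. dd i w) * G (\<lambda>i. dd i w) \<partial>M) = (\<integral>w. F (\<lambda>i. dd i w) \<partial>M) * (\<integral>w. G (\<lambda>i. dd i w) \<partial>M)"
proof -
  have iv: "indep_var (PiM S (\<lambda>_. count_space UNIV)) (\<lambda>\<omega>. restrict (\<lambda>i. dd i \<omega>) S)
       (PiM T (\<lambda>_. count_space UNIV)) (\<lambda>\<omega>. restrict (\<lambda>i. dd i \<omega>) T)"
    by (rule indep_var_restrict[OF ind ST]) auto
  have eS: "PiM S (\<lambda>_. count_space (UNIV::'n set)) = count_space (PiE S (\<lambda>_. UNIV))"
    using S by (intro count_space_PiM_finite) auto
  have eT: "PiM T (\<lambda>_. count_space (UNIV::'n set)) = count_space (PiE T (\<lambda>_. UNIV))"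
    using T by (intro count_space_PiM_finite) auto
  have iv2: "indep_var borel (F \<circ> (\<lambda>\<omega>. restrict (\<lambda>i. dd i \<omega>) S)) borel (G \<circ> (\<lambda>\<omega>. restrict (\<lambda>i. dd i \<omega>) T))"
    by (rule indep_var_compose[OF iv]) (auto simp: eS eT)
  have fF: "(F \<circ> (\<lambda>\<omega>. restrict (\<lambda>i. dd i \<omega>) S)) = (\<lambda>w. F (\<lambda>i. dd i w))"
    using dep_restrict[OF F] by (auto simp: fun_eq_iff)
  have fG: "(G \<circ> (\<lambda>\<omega>. restrict (\<lambda>i. dd i \<omega>) T)) = (\<lambda>w. G (\<lambda>i. dd i w))"
    using dep_restrict[OF G] by (auto simp: fun_eq_iff)
  show ?thesis
    using indep_var_lebesgue_integral[OF iv2[unfolded fF fG] int_dep[OF ind S F] int_dep[OF ind T G]] .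
qed

lemma mean_single:
  fixes dd :: "nat \<Rightarrow> 'a \<Rightarrow> 'n::finite" and f :: "'n \<Rightarrow> real"
  assumes ind: "indep_vars (\<lambda>_. count_space UNIV) dd UNIV"
    and unif: "distr M (count_space UNIV) (dd t) = measure_pmf (pmf_of_set UNIV)"
  shows "(\<integral>w. f (dd t w) \<partial>M) = (\<Sum>r\<in>UNIV. f r) / real CARD('n)"
proof -
  have m: "dd t \<in> measurable M (count_space UNIV)" using ind by (auto simp: indep_vars_def)
  have "(\<integral>w. f (dd t w) \<partial>M) = integral\<^sup>L (distr M (count_space UNIV) (dd t)) f"
    by (rule integral_distr[symmetric, OF m]) auto
  also have "\<dots> = (\<Sum>r\<in>UNIV. f r) / real CARD('n)"
    unfolding unif by (subst integral_pmf_of_set) auto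
  finally show ?thesis .
qed

end


definition XX :: "real^'n^'n \<Rightarrow> real^'n \<Rightarrow> real^'n \<Rightarrow> (nat \<Rightarrow> nat) \<Rightarrow> nat \<Rightarrow> (nat \<Rightarrow> 'n) \<Rightarrow> real^'n" where
  "XX A xs x0 k j s = cr_iter A xs x0 1 k (\<lambda>t. axis (s t) 1) j"

definition gg :: "real^'n^'n \<Rightarrow> real^'n \<Rightarrow> real^'n \<Rightarrow> (nat \<Rightarrow> nat) \<Rightarrow> nat \<Rightarrow> (nat \<Rightarrow> 'n) \<Rightarrow> real" where
  "gg A xs x0 k j s = A_inner A (XX A xs x0 k (k j) s - xs) (axis (s j) 1)"

lemma XX_agree:
  assumes k_le: "\<And>j. k j \<le> j"
  shows "(\<forall>i<N. s i = s' i) \<Longrightarrow> m \<le> N \<Longrightarrow> XX A xs x0 k m s = XX A xs x0 k m s'"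
proof (induction m rule: less_induct)
  case (less m)
  show ?case
  proof (cases m)
    case 0 then show ?thesis by (simp add: XX_def)
  next
    case (Suc j)
    have "XX A xs x0 k j s = XX A xs x0 k j s'" using less Suc by auto
    moreover have "XX A xs x0 k (k j) s = XX A xs x0 k (k j) s'" using less Suc k_le[of j] by auto
    moreover have "s j = s' j" using less Suc by auto
    ultimately show ?thesis using Suc k_le[of j] by (simp add: XX_def)
  qed
qed

lemma A_inner_diff: "A_inner A (x - y) d = A_inner A x d - A_inner A y d"
  by (simp add: A_inner_def matrix_vector_mult_diff_distrib inner_diff_right)
lemma A_inner_add: "A_inner A (x + y) d = A_inner A x d + A_inner A y d"
  by (simp add: A_inner_def matrix_vector_right_distrib inner_add_right)
lemma A_inner_neg: "A_inner A (- x) d = - A_inner A x d"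
  using A_inner_diff[of A 0 x d] by (simp add: A_inner_def)
lemma A_inner_scale: "A_inner A (c *\<^sub>R x) d = c * A_inner A x d"
  by (simp add: A_inner_def matrix_vector_mult_scaleR)
lemma A_inner_scale2: "A_inner A x (c *\<^sub>R d) = c * A_inner A x d"
  by (simp add: A_inner_def)
lemma A_inner_sum: "finite T \<Longrightarrow> A_inner A (\<Sum>t\<in>T. f t) d = (\<Sum>t\<in>T. A_inner A (f t) d)"
  by (induction T rule: finite_induct) (auto simp: A_inner_def matrix_vector_right_distrib inner_add_right)
lemma A_inner_sym: "transpose A = A \<Longrightarrow> A_inner A x y = A_inner A y x"
  unfolding A_inner_def
  by (metis dot_lmul_matrix inner_commute vector_transpose_matrix)
lemma A_inner_axis: "A_inner A (axis a 1) (axis b 1) = A $ b $ a"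
proof -
  have "axis b 1 \<bullet> (A *v axis a 1) = (A *v axis a 1) \<bullet> axis b 1" by (rule inner_commute)
  also have "\<dots> = (A *v axis a 1) $ b" by (simp add: inner_axis)
  also have "\<dots> = A $ b \<bullet> axis a 1" by (simp add: matrix_vector_mul_component)
  also have "\<dots> = A $ b $ a" by (simp add: inner_axis)
  finally show ?thesis unfolding A_inner_def .
qed

lemma XX_step:
  assumes "k j \<le> j"
  shows "XX A xs x0 k (Suc j) s = XX A xs x0 k j s - gg A xs x0 k j s *\<^sub>R axis (s j) 1"
proof -
  have "A_inner A (xs - XX A xs x0 k (k j) s) (axis (s j) 1) = - gg A xs x0 k j s"
    by (simp add: gg_def A_inner_diff)
  then show ?thesis using assms by (simp add: XX_def)
qed

lemma pointwise:
  fixes A :: "real^'n^'n"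
  assumes k_le: "\<And>j. k j \<le> j" and symA: "transpose A = A" and diag: "\<And>i. A $ i $ i = 1"
  defines "Q \<equiv> (\<lambda>y. A_inner A y y)"
  shows "Q (XX A xs x0 k (Suc j) s - xs) \<le> Q (XX A xs x0 k j s - xs) - (gg A xs x0 k j s)\<^sup>2
     + (\<Sum>t=k j..<j. \<bar>A $ s j $ s t\<bar> * (gg A xs x0 k j s)\<^sup>2 + \<bar>A $ s j $ s t\<bar> * (gg A xs x0 k t s)\<^sup>2)"
proof -
  let ?X = "\<lambda>m. XX A xs x0 k m s" and ?g = "\<lambda>m. gg A xs x0 k m s"
  define d :: "real^'n" where "d = axis (s j) 1"
  define e where "e = ?X j - xs"
  have e1: "?X (Suc j) - xs = e - ?g j *\<^sub>R d" by (simp add: XX_step k_le e_def d_def)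
  have Qexp: "Q (e - c *\<^sub>R d) = Q e - 2 * c * A_inner A e d + c\<^sup>2" for c
  proof -
    have dd: "A_inner A d d = 1" by (simp add: d_def A_inner_axis diag)
    have "Q (e - c *\<^sub>R d) = A_inner A e e - c * A_inner A e d - c * A_inner A d e + c * c * A_inner A d d"
      unfolding Q_def A_inner_def
      by (simp add: matrix_vector_mult_diff_distrib matrix_vector_mult_scaleR inner_diff_left inner_diff_right algebra_simps)
    then show ?thesis using A_inner_sym[OF symA, of d e] dd by (simp add: Q_def power2_eq_square)
  qed
  have tel: "?X j - ?X (k j) = (\<Sum>t=k j..<j. ?X (Suc t) - ?X t)"
    using sum_Suc_diff'[OF k_le[of j], of ?X] by simp
  also have "\<dots> = (\<Sum>t=k j..<j. - (?g t *\<^sub>R axis (s t) 1))"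
    by (simp add: XX_step k_le)
  finally have tel': "?X j - ?X (k j) = (\<Sum>t=k j..<j. - (?g t *\<^sub>R axis (s t) 1))" .
  have h: "A_inner A e d = ?g j - (\<Sum>t=k j..<j. ?g t * A $ s j $ s t)"
  proof -
    have "A_inner A e d = A_inner A ((?X (k j) - xs) + (?X j - ?X (k j))) d" by (simp add: e_def)
    also have "\<dots> = ?g j + A_inner A (?X j - ?X (k j)) d"
      by (simp only: A_inner_add gg_def d_def)
    also have "A_inner A (?X j - ?X (k j)) d = - (\<Sum>t=k j..<j. ?g t * A $ s j $ s t)"
      unfolding tel' by (simp add: A_inner_neg A_inner_sum A_inner_scale A_inner_axis d_def sum_negf)
    finally show ?thesis by simp
  qed
  have "Q (?X (Suc j) - xs) = Q e - (?g j)\<^sup>2 + (\<Sum>t=k j..<j. 2 * ?g j * ?g t * A $ s j $ s t)"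
    unfolding e1 Qexp h by (simp add: algebra_simps power2_eq_square sum_distrib_left)
  also have "\<dots> \<le> Q e - (?g j)\<^sup>2 + (\<Sum>t=k j..<j. \<bar>A $ s j $ s t\<bar> * (?g j)\<^sup>2 + \<bar>A $ s j $ s t\<bar> * (?g t)\<^sup>2)"
  proof -
    have "2 * a * b * c \<le> \<bar>c\<bar> * a\<^sup>2 + \<bar>c\<bar> * b\<^sup>2" for a b c :: real
    proof -
      have "2 * a * b * c \<le> \<bar>2 * a * b\<bar> * \<bar>c\<bar>" by (metis abs_ge_self abs_mult)
      also have "\<bar>2 * a * b\<bar> \<le> a\<^sup>2 + b\<^sup>2"
        by (smt (verit) abs_mult abs_square_eq_1 power2_sum sum_squares_ge_zero
            zero_le_power2 abs_le_square_iff power2_diff)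
      then have "\<bar>2 * a * b\<bar> * \<bar>c\<bar> \<le> (a\<^sup>2 + b\<^sup>2) * \<bar>c\<bar>" by (simp add: mult_right_mono)
      finally show ?thesis by (simp add: algebra_simps)
    qed
    then show ?thesis by (intro add_left_mono sum_mono) auto
  qed
  finally show ?thesis by (simp add: e_def)
qed



lemma dep_mult: "dep S F \<Longrightarrow> dep T G \<Longrightarrow> dep (S \<union> T) (\<lambda>s. (F s :: real) * G s)"
  unfolding dep_def by (metis UnCI)
lemma dep_fun: "dep S F \<Longrightarrow> dep S (\<lambda>s. h (F s))"
  unfolding dep_def by metis

lemma dep_XX: assumes k_le: "\<And>j. k j \<le> j" and "m \<le> N"
  shows "dep {..<N} (\<lambda>s. XX A xs x0 k m s)"
  unfolding dep_def by (auto intro!: XX_agree[OF k_le _ assms(2)])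

lemma dep_gg: assumes k_le: "\<And>j. k j \<le> j"
  shows "dep (insert j {..<k j}) (\<lambda>s. gg A xs x0 k j s)"
  unfolding dep_def gg_def
proof (intro allI impI)
  fix s s' :: "nat \<Rightarrow> 'a" assume a: "\<forall>i\<in>insert j {..<k j}. s i = s' i"
  then have "XX A xs x0 k (k j) s = XX A xs x0 k (k j) s'" by (intro XX_agree[OF k_le, of "k j"]) auto
  with a show "A_inner A (XX A xs x0 k (k j) s - xs) (axis (s j) 1) =
       A_inner A (XX A xs x0 k (k j) s' - xs) (axis (s' j) 1)" by simp
qed

lemma dep_gg': assumes k_le: "\<And>j. k j \<le> j" and "j < N"
  shows "dep {..<N} (\<lambda>s. gg A xs x0 k j s)"
  by (rule dep_mono[OF dep_gg[OF k_le]]) (use assms(2) k_le[of j] in auto)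

lemma dep_single: "dep {t} (\<lambda>s. h (s t))"
  unfolding dep_def by auto

lemma double_sum:
  fixes G :: "nat \<Rightarrow> real"
  assumes G: "\<And>t. G t \<ge> 0" and k_ge: "\<And>j. j \<le> k j + \<tau>"
  shows "(\<Sum>j<m. \<Sum>t=k j..<j. G t) \<le> real \<tau> * (\<Sum>t<m. G t)"
proof -
  have "(\<Sum>j<m. \<Sum>t=k j..<j. G t) = (\<Sum>j<m. \<Sum>t<m. if t \<in> {k j..<j} then G t else 0)"
  proof (rule sum.cong[OF refl])
    fix j assume "j \<in> {..<m}"
    then have "{..<m} \<inter> {k j..<j} = {k j..<j}" by auto
    then show "(\<Sum>t=k j..<j. G t) = (\<Sum>t<m. if t \<in> {k j..<j} then G t else 0)"
      using sum.inter_restrict[of "{..<m}" G "{k j..<j}"] by simp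
  qed
  also have "\<dots> = (\<Sum>t<m. \<Sum>j<m. if t \<in> {k j..<j} then G t else 0)" by (rule sum.swap)
  also have "\<dots> \<le> (\<Sum>t<m. real \<tau> * G t)"
  proof (rule sum_mono)
    fix t assume "t \<in> {..<m}"
    have "(\<Sum>j<m. if t \<in> {k j..<j} then G t else 0) = (\<Sum>j\<in>{..<m} \<inter> {j. t \<in> {k j..<j}}. G t)"
      using sum.inter_restrict[of "{..<m}" "\<lambda>j. G t" "{j. t \<in> {k j..<j}}"] by simp
    also have "\<dots> = real (card ({..<m} \<inter> {j. t \<in> {k j..<j}})) * G t" by simp
    also have "\<dots> \<le> real \<tau> * G t"
    proof (rule mult_right_mono[OF _ G])
      have "{..<m} \<inter> {j. t \<in> {k j..<j}} \<subseteq> {Suc t..t+\<tau>}"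
        using k_ge by (auto simp: Suc_le_eq) (meson add_le_mono1 le_trans)
      then have "card ({..<m} \<inter> {j. t \<in> {k j..<j}}) \<le> card {Suc t..t+\<tau>}"
        by (intro card_mono) auto
      then show "real (card ({..<m} \<inter> {j. t \<in> {k j..<j}})) \<le> real \<tau>" by simp
    qed
    finally show "(\<Sum>j<m. if t \<in> {k j..<j} then G t else 0) \<le> real \<tau> * G t" .
  qed
  also have "\<dots> = real \<tau> * (\<Sum>t<m. G t)" by (simp add: sum_distrib_left)
  finally show ?thesis .
qed

context prob_space begin

lemma split_bound:
  fixes dd :: "nat \<Rightarrow> 'a \<Rightarrow> 'n::finite" and F G :: "'n \<Rightarrow> (nat \<Rightarrow> 'n) \<Rightarrow> real"
  assumes ind: "indep_vars (\<lambda>_. count_space UNIV) dd UNIV" and S: "finite S" and T: "finite T"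
    and ST: "S \<inter> T = {}" and F: "\<And>l. dep S (F l)" and G: "\<And>l. dep T (G l)"
    and Fnn: "\<And>l s. F l s \<ge> 0" and Gb: "\<And>l. (\<integral>w. G l (\<lambda>i. dd i w) \<partial>M) \<le> \<rho>"
  shows "(\<integral>w. (\<Sum>l\<in>UNIV. F l (\<lambda>i. dd i w) * G l (\<lambda>i. dd i w)) \<partial>M)
     \<le> \<rho> * (\<integral>w. (\<Sum>l\<in>UNIV. F l (\<lambda>i. dd i w)) \<partial>M)"
proof -
  have "(\<integral>w. (\<Sum>l\<in>UNIV. F l (\<lambda>i. dd i w) * G l (\<lambda>i. dd i w)) \<partial>M)
      = (\<Sum>l\<in>UNIV. (\<integral>w. F l (\<lambda>i. dd i w) * G l (\<lambda>i. dd i w) \<partial>M))"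
    by (rule Bochner_Integration.integral_sum[where I=UNIV and f="\<lambda>l w. F l (\<lambda>i. dd i w) * G l (\<lambda>i. dd i w)" and M=M])
      (rule int_dep[OF ind _ dep_mult[OF F G]], use S T in auto)
  also have "\<dots> = (\<Sum>l\<in>UNIV. (\<integral>w. F l (\<lambda>i. dd i w) \<partial>M) * (\<integral>w. G l (\<lambda>i. dd i w) \<partial>M))"
    by (rule sum.cong[OF refl], rule indep_mult_dep[OF ind S F T G ST])
  also have "\<dots> \<le> (\<Sum>l\<in>UNIV. (\<integral>w. F l (\<lambda>i. dd i w) \<partial>M) * \<rho>)"
    by (intro sum_mono mult_left_mono Gb integral_nonneg_AE) (auto intro: Fnn)
  also have "\<dots> = \<rho> * (\<Sum>l\<in>UNIV. (\<integral>w. F l (\<lambda>i. dd i w) \<partial>M))"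
    by (simp add: sum_distrib_left mult.commute)
  also have "(\<Sum>l\<in>UNIV. (\<integral>w. F l (\<lambda>i. dd i w) \<partial>M)) = (\<integral>w. (\<Sum>l\<in>UNIV. F l (\<lambda>i. dd i w)) \<partial>M)"
    by (rule Bochner_Integration.integral_sum[where I=UNIV and f="\<lambda>l w. F l (\<lambda>i. dd i w)" and M=M, symmetric])
      (rule int_dep[OF ind S F])
  finally show ?thesis .
qed

end


lemma dep2: "dep S F \<Longrightarrow> dep S G \<Longrightarrow> dep S (\<lambda>s. h (F s) (G s))"
  unfolding dep_def by metis

lemma dep_coord: "j \<in> S \<Longrightarrow> dep S (\<lambda>s. s j)"
  unfolding dep_def by auto

lemma sum_delta_mult:
  fixes X :: real and Y :: "'n::finite \<Rightarrow> real"
  shows "(\<Sum>l\<in>UNIV. (if a = l then X else 0) * Y l) = X * Y a"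
proof -
  have "(\<Sum>l\<in>UNIV. (if a = l then X else 0) * Y l) = (\<Sum>l\<in>UNIV. if a = l then X * Y l else 0)"
    by (rule sum.cong) auto
  also have "\<dots> = X * Y a" by (simp add: sum.delta)
  finally show ?thesis .
qed

lemma sum_delta1:
  fixes X :: real
  shows "(\<Sum>l\<in>(UNIV::'n::finite set). (if a = l then X else 0)) = X"
  by (simp add: sum.delta)

theorem mainTheorem7:
  fixes A :: "real^'n^'n" and b x0 xs :: "real^'n"
    and M :: "'w measure" and dd :: "nat \<Rightarrow> 'w \<Rightarrow> 'n"
    and \<tau> :: nat and k :: "nat \<Rightarrow> nat"
  assumes n2: "CARD('n) \<ge> 2"
    and symA: "transpose A = A"
    and posdef: "\<And>x. x \<noteq> 0 \<Longrightarrow> x \<bullet> (A *v x) > 0"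
    and diag: "\<And>i. A $ i $ i = 1"
    and P: "prob_space M"
    and indep: "prob_space.indep_vars M (\<lambda>_. count_space UNIV) dd UNIV"
    and unif: "\<And>j. distr M (count_space UNIV) (dd j) = measure_pmf (pmf_of_set UNIV)"
    and k_le: "\<And>j. k j \<le> j" and k_ge: "\<And>j. j \<le> k j + \<tau>"
    and xs_def: "xs = matrix_inv A *v b"
  defines "E \<equiv> (\<lambda>j. integral\<^sup>L M (\<lambda>w. A_inner A (cr_X A xs x0 1 k dd j w - xs) (cr_X A xs x0 1 k dd j w - xs)))"
    and "G \<equiv> (\<lambda>j. integral\<^sup>L M (\<lambda>w. (A_inner A (cr_X A xs x0 1 k dd (k j) w - xs) (axis (dd j w) 1))\<^sup>2))"
    and "\<rho> \<equiv> (MAX l. (\<Sum>r\<in>UNIV. \<bar>A $ l $ r\<bar>) / real CARD('n))"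
  shows "(\<forall>j. E (Suc j) \<le> E j - (1 - \<rho> * real \<tau>) * G j + \<rho> * (\<Sum>t=k j..<j. G t))
       \<and> (\<forall>m\<ge>1. E m \<le> E 0 - (1 - 2 * \<rho> * real \<tau>) * (\<Sum>i<m. G i))"
proof -
  interpret prob_space M by (rule P)
  define Q where "Q = (\<lambda>y. A_inner A y y)"
  let ?X = "XX A xs x0 k" and ?g = "gg A xs x0 k"
  have cr: "\<And>j w. cr_X A xs x0 1 k dd j w = ?X j (\<lambda>i. dd i w)" by (simp add: cr_X_def XX_def)
  have Eeq: "\<And>j. E j = (\<integral>w. Q (?X j (\<lambda>i. dd i w) - xs) \<partial>M)" by (simp add: E_def cr Q_def)
  have Geq: "\<And>j. G j = (\<integral>w. (?g j (\<lambda>i. dd i w))\<^sup>2 \<partial>M)" by (simp add: G_def cr gg_def)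
  have Gnn: "\<And>j. G j \<ge> 0" unfolding Geq by (rule integral_nonneg_AE) auto
  have rho_ge: "\<And>l. (\<Sum>r\<in>UNIV. \<bar>A $ l $ r\<bar>) / real CARD('n) \<le> \<rho>"
    unfolding \<rho>_def by (rule Max_ge) auto
  have rho_nn: "\<rho> \<ge> 0"
    using rho_ge[of undefined] by (smt (verit) divide_nonneg_nonneg of_nat_0_le_iff sum_nonneg abs_ge_zero)
  have symm: "\<And>a c. A $ a $ c = A $ c $ a"
  proof -
    fix a c
    have "transpose A $ a $ c = A $ a $ c" using symA by simp
    then show "A $ a $ c = A $ c $ a" by (simp add: transpose_def)
  qed
  have intS: "\<And>N F. dep {..<N} F \<Longrightarrow> integrable M (\<lambda>w. F (\<lambda>i. dd i w) :: real)"
    by (rule int_dep[OF indep]) auto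
  have mean: "\<And>t f. (\<integral>w. f (dd t w) \<partial>M) = (\<Sum>r\<in>UNIV. f r) / real CARD('n)"
    by (rule mean_single[OF indep unif])
  have step: "E (Suc j) \<le> E j - (1 - \<rho> * real \<tau>) * G j + \<rho> * (\<Sum>t=k j..<j. G t)" for j
  proof -
    define R1 where "R1 = (\<lambda>t s. \<bar>A $ s j $ s t\<bar> * (?g j s)\<^sup>2)"
    define R2 where "R2 = (\<lambda>t s. \<bar>A $ s j $ s t\<bar> * (?g t s)\<^sup>2)"
    have dg: "\<And>t. t \<le> j \<Longrightarrow> dep {..<Suc j} (\<lambda>s. ?g t s)"
      by (rule dep_gg'[OF k_le]) simp
    have da: "\<And>t. t \<le> j \<Longrightarrow> dep {..<Suc j} (\<lambda>s. \<bar>A $ s j $ s t\<bar>)"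
      by (auto simp: dep_def)
    have dR1: "\<And>t. t \<le> j \<Longrightarrow> dep {..<Suc j} (R1 t)"
      unfolding R1_def using dep2[OF da dg, where h="\<lambda>a b. a * b\<^sup>2"] by (simp add: order_refl)
    have dR2: "\<And>t. t \<le> j \<Longrightarrow> dep {..<Suc j} (R2 t)"
      unfolding R2_def using dep2[OF da dg, where h="\<lambda>a b. a * b\<^sup>2"] by simp
    have dQ: "\<And>m. m \<le> Suc j \<Longrightarrow> dep {..<Suc j} (\<lambda>s. Q (?X m s - xs))"
      using dep_fun[OF dep_XX[OF k_le], where h="\<lambda>v. Q (v - xs)"] by simp
    have dg2: "dep {..<Suc j} (\<lambda>s. (?g j s)\<^sup>2)"
      using dep_fun[OF dg[of j], where h="\<lambda>v. v\<^sup>2"] by simp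
    have a: "(\<integral>w. R1 t (\<lambda>i. dd i w) \<partial>M) \<le> \<rho> * G j" if t: "k j \<le> t" "t < j" for t
    proof -
      define Fa where "Fa = (\<lambda>l s. if s j = l then (?g j s)\<^sup>2 else 0)"
      define Ga where "Ga = (\<lambda>l (s::nat \<Rightarrow> 'n). \<bar>A $ l $ s t\<bar>)"
      have e1: "(\<lambda>w. R1 t (\<lambda>i. dd i w)) = (\<lambda>w. \<Sum>l\<in>UNIV. Fa l (\<lambda>i. dd i w) * Ga l (\<lambda>i. dd i w))"
        unfolding R1_def Fa_def Ga_def by (rule ext, subst sum_delta_mult, simp add: mult.commute)
      have ineq: "(\<integral>w. (\<Sum>l\<in>UNIV. Fa l (\<lambda>i. dd i w) * Ga l (\<lambda>i. dd i w)) \<partial>M)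
          \<le> \<rho> * (\<integral>w. (\<Sum>l\<in>UNIV. Fa l (\<lambda>i. dd i w)) \<partial>M)"
      proof (rule split_bound[OF indep, of "insert j {..<k j}" "{t}"])
        show "insert j {..<k j} \<inter> {t} = {}" using t by auto
        show "dep (insert j {..<k j}) (Fa l)" for l
          unfolding Fa_def using dep2[OF dep_coord dep_gg[OF k_le], where h="\<lambda>a b. if a = l then b\<^sup>2 else 0"]
          by simp
        show "dep {t} (Ga l)" for l unfolding Ga_def by (rule dep_single)
        show "0 \<le> Fa l s" for l s unfolding Fa_def by simp
        show "(\<integral>w. Ga l (\<lambda>i. dd i w) \<partial>M) \<le> \<rho>" for l
          unfolding Ga_def using mean[of "\<lambda>r. \<bar>A $ l $ r\<bar>" t] rho_ge[of l] by simp
      qed auto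
      have e2: "(\<lambda>w. \<Sum>l\<in>UNIV. Fa l (\<lambda>i. dd i w)) = (\<lambda>w. (?g j (\<lambda>i. dd i w))\<^sup>2)"
        unfolding Fa_def by (simp add: sum_delta1)
      show ?thesis using ineq unfolding Geq e1 e2 .
    qed
    have b: "(\<integral>w. R2 t (\<lambda>i. dd i w) \<partial>M) \<le> \<rho> * G t" if t: "t < j" for t
    proof -
      define Fa where "Fa = (\<lambda>l s. if s t = l then (?g t s)\<^sup>2 else 0)"
      define Ga where "Ga = (\<lambda>l (s::nat \<Rightarrow> 'n). \<bar>A $ s j $ l\<bar>)"
      have e1: "(\<lambda>w. R2 t (\<lambda>i. dd i w)) = (\<lambda>w. \<Sum>l\<in>UNIV. Fa l (\<lambda>i. dd i w) * Ga l (\<lambda>i. dd i w))"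
        unfolding R2_def Fa_def Ga_def by (rule ext, subst sum_delta_mult, simp add: mult.commute)
      have ineq: "(\<integral>w. (\<Sum>l\<in>UNIV. Fa l (\<lambda>i. dd i w) * Ga l (\<lambda>i. dd i w)) \<partial>M)
          \<le> \<rho> * (\<integral>w. (\<Sum>l\<in>UNIV. Fa l (\<lambda>i. dd i w)) \<partial>M)"
      proof (rule split_bound[OF indep, of "insert t {..<k t}" "{j}"])
        show "insert t {..<k t} \<inter> {j} = {}" using t k_le[of t] by auto
        show "dep (insert t {..<k t}) (Fa l)" for l
          unfolding Fa_def using dep2[OF dep_coord dep_gg[OF k_le], where h="\<lambda>a b. if a = l then b\<^sup>2 else 0"]
          by simp
        show "dep {j} (Ga l)" for l unfolding Ga_def by (rule dep_single)
        show "0 \<le> Fa l s" for l s unfolding Fa_def by simp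
        show "(\<integral>w. Ga l (\<lambda>i. dd i w) \<partial>M) \<le> \<rho>" for l
          unfolding Ga_def using mean[of "\<lambda>r. \<bar>A $ r $ l\<bar>" j] rho_ge[of l] by (simp add: symm[of _ l])
      qed auto
      have e2: "(\<lambda>w. \<Sum>l\<in>UNIV. Fa l (\<lambda>i. dd i w)) = (\<lambda>w. (?g t (\<lambda>i. dd i w))\<^sup>2)"
        unfolding Fa_def by (simp add: sum_delta1)
      show ?thesis using ineq unfolding Geq e1 e2 .
    qed
    have pw: "\<And>w. Q (?X (Suc j) (\<lambda>i. dd i w) - xs) \<le> Q (?X j (\<lambda>i. dd i w) - xs) - (?g j (\<lambda>i. dd i w))\<^sup>2
       + (\<Sum>t=k j..<j. R1 t (\<lambda>i. dd i w) + R2 t (\<lambda>i. dd i w))"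
      unfolding Q_def R1_def R2_def by (rule pointwise[OF k_le symA diag])
    have iQ: "\<And>m. m \<le> Suc j \<Longrightarrow> integrable M (\<lambda>w. Q (?X m (\<lambda>i. dd i w) - xs))"
      by (rule intS[OF dQ])
    have ig: "integrable M (\<lambda>w. (?g j (\<lambda>i. dd i w))\<^sup>2)" by (rule intS[OF dg2])
    have iR1: "\<And>t. t \<in> {k j..<j} \<Longrightarrow> integrable M (\<lambda>w. R1 t (\<lambda>i. dd i w))"
      by (rule intS[OF dR1]) simp
    have iR2: "\<And>t. t \<in> {k j..<j} \<Longrightarrow> integrable M (\<lambda>w. R2 t (\<lambda>i. dd i w))"
      by (rule intS[OF dR2]) simp
    have iSum: "integrable M (\<lambda>w. \<Sum>t=k j..<j. R1 t (\<lambda>i. dd i w) + R2 t (\<lambda>i. dd i w))"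
    proof (rule Bochner_Integration.integrable_sum[where f="\<lambda>t w. R1 t (\<lambda>i. dd i w) + R2 t (\<lambda>i. dd i w)"])
      fix t assume "t \<in> {k j..<j}"
      then show "integrable M (\<lambda>w. R1 t (\<lambda>i. dd i w) + R2 t (\<lambda>i. dd i w))"
        using iR1 iR2 by (intro Bochner_Integration.integrable_add) auto
    qed
    have "E (Suc j) \<le> (\<integral>w. Q (?X j (\<lambda>i. dd i w) - xs) - (?g j (\<lambda>i. dd i w))\<^sup>2
       + (\<Sum>t=k j..<j. R1 t (\<lambda>i. dd i w) + R2 t (\<lambda>i. dd i w)) \<partial>M)"
      unfolding Eeq
      by (rule integral_mono[OF iQ _ pw]) (use iQ ig iSum in auto)
    also have "\<dots> = E j - G j + (\<Sum>t=k j..<j. (\<integral>w. R1 t (\<lambda>i. dd i w) \<partial>M) + (\<integral>w. R2 t (\<lambda>i. dd i w) \<partial>M))"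
      unfolding Eeq Geq
      using iQ[of j] ig iSum iR1 iR2
      by (simp add: Bochner_Integration.integral_sum integrable_add)
    also have "\<dots> \<le> E j - G j + (\<Sum>t=k j..<j. \<rho> * G j + \<rho> * G t)"
      using a b by (intro add_left_mono sum_mono add_mono) auto
    also have "\<dots> = E j - G j + real (j - k j) * \<rho> * G j + \<rho> * (\<Sum>t=k j..<j. G t)"
      by (simp add: sum.distrib sum_distrib_left)
    also have "\<dots> \<le> E j - (1 - \<rho> * real \<tau>) * G j + \<rho> * (\<Sum>t=k j..<j. G t)"
    proof -
      have "real (j - k j) \<le> real \<tau>" using k_ge[of j] by simp
      then have "real (j - k j) * (\<rho> * G j) \<le> real \<tau> * (\<rho> * G j)"
        using rho_nn Gnn[of j] by (intro mult_right_mono) auto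
      then show ?thesis by (simp add: algebra_simps)
    qed
    finally show ?thesis .
  qed
  have tele: "E m \<le> E 0 - (1 - \<rho> * real \<tau>) * (\<Sum>i<m. G i) + \<rho> * (\<Sum>j<m. \<Sum>t=k j..<j. G t)" for m
  proof (induction m)
    case 0 then show ?case by simp
  next
    case (Suc m)
    then show ?case using step[of m] by (simp add: algebra_simps)
  qed
  have "E m \<le> E 0 - (1 - 2 * \<rho> * real \<tau>) * (\<Sum>i<m. G i)" for m
  proof -
    have "\<rho> * (\<Sum>j<m. \<Sum>t=k j..<j. G t) \<le> \<rho> * (real \<tau> * (\<Sum>t<m. G t))"
      by (rule mult_left_mono[OF double_sum[OF Gnn k_ge] rho_nn])
    then show ?thesis using tele[of m] by (simp add: algebra_simps)
  qed
  then show ?thesis using step by auto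
qed


end
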